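(* Let $\mathcal{X}$ be a finite state space and let $(Q_t)_{t\in[0,1]}$ be a family of transition-rate matrices on $\mathcal{X}$. Let $r_t(x,y)\ge 0$ and $\hat r_t(x,y)>0$ ($x\neq y$, $t\in[0,1]$) be functions such that the two families of matrices $Q^*_t(y,x):=Q_t(x,y)\,r_t(x,y)$ and $\hat Q_t(y,x):=Q_t(x,y)\,\hat r_t(x,y)$ (for $y\neq x$, with diagonals chosen so that columns sum to zero) are transition-rate matrices. Consider two CTMCs running backwards in time from $t=1$ to $t=0$: the first has, at time $t$, rate $Q^*_t(y,x)=Q_t(x,y)r_t(x,y)$ of jumping from $x$ to $y$ and initial (time-$1$) distribution $q^*_1$; the second has jump rate $\hat Q_t(y,x)=Q_t(x,y)\hat r_t(x,y)$ from $x$ to $y$ and initial distribution $\hat q_1$. Denote by $q^*_t$ and $\hat q_t$ their respective marginal distributions at time $t$. Then $$D_{KL}(q^*_0\,\|\,\hat q_0)\le \int_0^1 \mathbb{E}_{x_t\sim q^*_t}\sum_{y\neq x_t} Q_t(x_t,y)\,\ell\big(r_t(x_t,y),\hat r_t(x_t,y)\big)\,dt + D_{KL}(q^*_1\,\|\,\hat q_1).$$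
   Context: A transition-rate matrix $Q$ on a finite set $\mathcal{X}$ is a matrix indexed by $\mathcal{X}\times\mathcal{X}$ with nonnegative off-diagonal entries and with every column summing to zero; $Q(x,y)$ for $x\neq y$ is the rate of jumping from state $y$ to state $x$. Define $K(a)=a(\log a-1)$ (with $K(0)=0$) and $\ell(a,b)=b-a\log b+K(a)$ for $a\ge 0$, $b>0$. $D_{KL}$ is the Kullback–Leibler divergence. All time-dependent quantities are assumed regular enough (e.g. continuous in $t$) for the processes and integrals to be well defined. *)

theory Defs
  imports "HOL-Analysis.Analysis"
begin

definition Kfun :: "real \<Rightarrow> real" where
  "Kfun a = (if a = 0 then 0 else a * (ln a - 1))"

definition ellfun :: "real \<Rightarrow> real \<Rightarrow> real" where
  "ellfun a b = b - a * ln b + Kfun a"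

text \<open>Transition-rate matrix on a finite type: nonnegative off-diagonal entries,
  every column sums to zero. Q x y is the rate of jumping from y to x.\<close>
definition rate_matrix :: "('x::finite \<Rightarrow> 'x \<Rightarrow> real) \<Rightarrow> bool" where
  "rate_matrix Q \<longleftrightarrow> (\<forall>x y. x \<noteq> y \<longrightarrow> Q x y \<ge> 0) \<and> (\<forall>y. (\<Sum>x\<in>UNIV. Q x y) = 0)"

definition prob_vec :: "('x::finite \<Rightarrow> real) \<Rightarrow> bool" where
  "prob_vec p \<longleftrightarrow> (\<forall>x. p x \<ge> 0) \<and> (\<Sum>x\<in>UNIV. p x) = 1"

definition KL :: "('x::finite \<Rightarrow> real) \<Rightarrow> ('x \<Rightarrow> real) \<Rightarrow> ereal" where
  "KL p q = (if (\<forall>x. p x > 0 \<longrightarrow> q x > 0)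
             then ereal (\<Sum>x\<in>UNIV. if p x = 0 then 0 else p x * ln (p x / q x))
             else \<infinity>)"

text \<open>Generator built from Q and a ratio function r: G y x = Q x y * r x y for y \<noteq> x
  (rate of jumping from x to y), diagonal chosen so columns sum to zero.\<close>
definition gen :: "('x::finite \<Rightarrow> 'x \<Rightarrow> real) \<Rightarrow> ('x \<Rightarrow> 'x \<Rightarrow> real) \<Rightarrow> 'x \<Rightarrow> 'x \<Rightarrow> real" where
  "gen Q r y x = (if y = x then - (\<Sum>z\<in>UNIV - {x}. Q x z * r x z) else Q x y * r x y)"

text \<open>Marginals of a CTMC run backwards in time from t=1 to t=0 with generator G t
  (G t y x = rate of jumping from x to y at time t): Kolmogorov forward equation
  in reversed time s = 1 - t, i.e.  d/dt q_t(y) = - sum_x G_t(y,x) q_t(x).\<close>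
definition backward_marginals ::
  "(real \<Rightarrow> 'x::finite \<Rightarrow> 'x \<Rightarrow> real) \<Rightarrow> (real \<Rightarrow> 'x \<Rightarrow> real) \<Rightarrow> bool" where
  "backward_marginals G q \<longleftrightarrow>
     (\<forall>t\<in>{0..1}. \<forall>y. ((\<lambda>s. q s y) has_real_derivative
        (- (\<Sum>x\<in>UNIV. G t y x * q t x))) (at t within {0..1}))"

end

theory Submission
  imports Defs "HOL-Real_Asymp.Real_Asymp"
begin


lemma mono_within:
  fixes f f' :: "real \<Rightarrow> real"
  assumes ab: "a \<le> b" and d: "\<And>s. s \<in> {a..b} \<Longrightarrow> (f has_real_derivative f' s) (at s within {a..b})"
    and nn: "\<And>s. s \<in> {a..b} \<Longrightarrow> f' s \<ge> 0"
  shows "f a \<le> f b"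
proof (rule DERIV_nonneg_imp_increasing_open[OF ab])
  fix x assume x: "a < x" "x < b"
  then have "at x within {a..b} = at x" by (simp add: at_within_Icc_at)
  then show "\<exists>y. DERIV f x :> y \<and> y \<ge> 0" using d[of x] nn[of x] x by auto
next
  show "continuous_on {a..b} f" using d by (rule DERIV_continuous_on)
qed

lemma Kfun_eq: "Kfun a = a * (ln a - 1)" by (simp add: Kfun_def)

lemma Kfun_ineq: assumes "a \<ge> 0" "w > 0" shows "Kfun a + w - a * ln w \<ge> 0"
proof (cases "a = 0")
  case True thus ?thesis using assms by (simp add: Kfun_def)
next
  case False then have a: "a > 0" using assms by simp
  have "ln (w / a) \<le> w/a - 1" using ln_le_minus_one a assms by simp
  hence "a * ln (w/a) \<le> a * (w/a - 1)" using a by (simp add: mult_left_mono)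
  hence "a * ln (w/a) \<le> w - a" using a by (simp add: algebra_simps)
  moreover have "ln (w/a) = ln w - ln a" using a assms by (simp add: ln_div)
  ultimately show ?thesis by (simp add: Kfun_eq algebra_simps)
qed

lemma xlnx_lim: "((\<lambda>a::real. a * ln a) \<longlongrightarrow> 0) (at_right 0)" by real_asymp

lemma xlnx_cont: "continuous_on {0..} (\<lambda>a::real. a * ln a)"
  unfolding continuous_on_def
proof
  fix x :: real assume x: "x \<in> {0..}"
  show "((\<lambda>a. a * ln a) \<longlongrightarrow> x * ln x) (at x within {0..})"
  proof (cases "x = 0")
    case True
    have s: "{0::real..} - {0} = {0<..} - {0}" by auto
    have e: "at (0::real) within {0..} = at_right 0"
      unfolding at_within_def s by simp
    show ?thesis using True e xlnx_lim by simp
  next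
    case False then have "x > 0" using x by simp
    then have "isCont (\<lambda>a. a * ln a) x" by (auto intro!: continuous_intros)
    then show ?thesis using continuous_at_imp_continuous_within by (auto simp: continuous_within)
  qed
qed

lemma Kfun_cont: "continuous_on {0..} Kfun"
proof -
  have "Kfun = (\<lambda>a. a * ln a - a)" by (auto simp: Kfun_def algebra_simps fun_eq_iff)
  moreover have "continuous_on {0..} (\<lambda>a::real. a * ln a - a)"
    by (rule continuous_on_diff[OF xlnx_cont continuous_on_id])
  ultimately show ?thesis by metis
qed



lemma cont_bound:
  fixes f :: "real \<Rightarrow> real"
  assumes "continuous_on {0..1} f"
  shows "\<exists>B. \<forall>t\<in>{0..1}. \<bar>f t\<bar> \<le> B"
proof -
  have "compact (f ` {0..1})" using assms compact_continuous_image compact_Icc by blast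
  then obtain B where "\<forall>y\<in>f ` {0..1}. norm y \<le> B" using compact_imp_bounded bounded_iff by metis
  thus ?thesis by auto
qed

lemma cont_bound2:
  fixes G :: "real \<Rightarrow> 'x::finite \<Rightarrow> 'x \<Rightarrow> real"
  assumes "\<forall>x y. continuous_on {0..1} (\<lambda>t. G t x y)"
  shows "\<exists>B. \<forall>t\<in>{0..1}. \<forall>x y. \<bar>G t x y\<bar> \<le> B"
proof -
  have "\<forall>x y. \<exists>B. \<forall>t\<in>{0..1}. \<bar>G t x y\<bar> \<le> B" using assms cont_bound by blast
  then obtain Bf where Bf: "\<forall>x y. \<forall>t\<in>{0..1}. \<bar>G t x y\<bar> \<le> Bf x y" by metis
  define B where "B = (\<Sum>x\<in>UNIV. \<Sum>y\<in>UNIV. \<bar>Bf x y\<bar>)"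
  have "\<forall>t::real\<in>{0..1}. \<forall>x y. \<bar>G t x y\<bar> \<le> B"
  proof (intro ballI allI)
    fix t :: real and x y assume t: "t \<in> {0..1}"
    have "\<bar>G t x y\<bar> \<le> Bf x y" using Bf t by blast
    also have "\<dots> \<le> \<bar>Bf x y\<bar>" by simp
    also have "\<dots> \<le> (\<Sum>y\<in>UNIV. \<bar>Bf x y\<bar>)" by (rule member_le_sum) auto
    also have "\<dots> \<le> B" unfolding B_def by (rule member_le_sum) (auto intro: sum_nonneg)
    finally show "\<bar>G t x y\<bar> \<le> B" .
  qed
  thus ?thesis by blast
qed

lemma gen_off: "y \<noteq> x \<Longrightarrow> gen Q r y x = Q x y * r x y" by (simp add: gen_def)
lemma gen_diag: "gen Q r x x = - (\<Sum>z\<in>UNIV-{x}. Q x z * r x z)" by (simp add: gen_def)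

lemma gen_colsum: "(\<Sum>y\<in>UNIV. gen Q r y (x::'x::finite)) = 0"
proof -
  have "(\<Sum>y\<in>UNIV. gen Q r y x) = gen Q r x x + (\<Sum>y\<in>UNIV-{x}. gen Q r y x)"
    using sum.remove[of UNIV x "\<lambda>y. gen Q r y x"] by simp
  also have "(\<Sum>y\<in>UNIV-{x}. gen Q r y x) = (\<Sum>y\<in>UNIV-{x}. Q x y * r x y)"
    by (rule sum.cong) (auto simp: gen_def)
  finally show ?thesis by (simp add: gen_def)
qed

lemma gen_cont:
  assumes "\<forall>x y. continuous_on {0..1} (\<lambda>t. Q t x y)" "\<forall>x y. continuous_on {0..1} (\<lambda>t. r t x y)"
  shows "continuous_on {0..1} (\<lambda>t. gen (Q t) (r t) y x)"
  using assms unfolding gen_def by (cases "y = x") (auto intro!: continuous_intros)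

lemma minsq_deriv: "((\<lambda>v::real. (min v 0)^2) has_real_derivative 2 * min v 0) (at v)"
proof -
  consider "v < 0" | "v > 0" | "v = 0" by linarith
  then show ?thesis
  proof cases
    case 1
    have d: "((\<lambda>v::real. v^2) has_real_derivative 2 * min v 0) (at v)"
      using 1 by (auto intro!: derivative_eq_intros)
    show ?thesis
    proof (rule has_field_derivative_transform_within_open[OF d open_lessThan])
      show "v \<in> {..<0}" using 1 by simp
      fix x :: real assume "x \<in> {..<0}"
      then show "x^2 = (min x 0)^2" by simp
    qed
  next
    case 2
    have d: "((\<lambda>v::real. 0) has_real_derivative 2 * min v 0) (at v)"
      using 2 by (auto intro!: derivative_eq_intros)
    show ?thesis
    proof (rule has_field_derivative_transform_within_open[OF d open_greaterThan])
      show "v \<in> {0<..}" using 2 by simp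
      fix x :: real assume "x \<in> {0<..}"
      then show "0 = (min x 0)^2" by simp
    qed
  next
    case 3
    have "((\<lambda>y. min y 0) \<longlongrightarrow> min 0 0) (at (0::real))" by (intro tendsto_intros)
    moreover have "\<forall>\<^sub>F y in at (0::real). min y 0 = ((min y 0)^2 - (min 0 0)^2) / (y - 0)"
      unfolding eventually_at_filter
    proof (rule always_eventually, intro allI impI)
      fix y :: real assume "y \<noteq> 0"
      then show "min y 0 = ((min y 0)^2 - (min 0 0)^2) / (y - 0)"
        by (cases "y \<le> 0") (simp_all add: min_def power2_eq_square)
    qed
    ultimately have "((\<lambda>y. ((min y 0)^2 - (min 0 0)^2) / (y - 0)) \<longlongrightarrow> 2 * min 0 0) (at (0::real))"
      using Lim_transform_eventually by fastforce
    then show ?thesis using 3 by (simp add: has_field_derivative_iff)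
  qed
qed

lemma pos_term_off:
  fixes a b g B :: real assumes "g \<ge> 0" "\<bar>g\<bar> \<le> B"
  shows "min a 0 * g * b \<le> B * ((min a 0)^2 + (min b 0)^2) / 2"
proof -
  define u where "u = min a 0"
  define v where "v = min b 0"
  have u: "u \<le> 0" and v: "v \<le> 0" "v \<le> b" by (auto simp: u_def v_def)
  have "u * g \<le> 0" using u assms by (simp add: mult_nonpos_nonneg)
  hence "u * g * b \<le> u * g * v" using v by (simp add: mult_left_mono_neg)
  also have "\<dots> = g * (u * v)" by simp
  also have "\<dots> \<le> B * (u * v)" using u v assms by (intro mult_right_mono) (auto simp: mult_nonpos_nonpos)
  also have "\<dots> \<le> B * ((u^2 + v^2)/2)"
  proof -
    have "0 \<le> (u - v)^2" by simp
    hence "u * v \<le> (u^2 + v^2)/2" by (simp add: power2_eq_square algebra_simps)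
    moreover have "B \<ge> 0" using assms by linarith
    ultimately show ?thesis by (rule mult_left_mono)
  qed
  finally show ?thesis by (simp add: u_def v_def)
qed

lemma pos_term_diag:
  fixes a g B :: real assumes "\<bar>g\<bar> \<le> B"
  shows "min a 0 * g * a \<le> B * ((min a 0)^2 + (min a 0)^2) / 2"
proof -
  have e: "min a 0 * g * a = g * (min a 0)^2" by (cases "a \<le> 0") (auto simp: min_def power2_eq_square)
  have "g * (min a 0)^2 \<le> B * (min a 0)^2" using assms by (intro mult_right_mono) auto
  moreover have "B * ((min a 0)^2 + (min a 0)^2) / 2 = B * (min a 0)^2" by simp
  ultimately show ?thesis using e by linarith
qed

lemma sum_pair_avg:
  fixes a :: "'x::finite \<Rightarrow> real"
  shows "(\<Sum>y\<in>UNIV. \<Sum>x\<in>UNIV. B * (a y + a x) / 2) = B * real CARD('x) * (\<Sum>x\<in>UNIV. a x)"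
proof -
  have "(\<Sum>y\<in>UNIV. \<Sum>x\<in>UNIV. B * (a y + a x) / 2)
     = (\<Sum>y\<in>UNIV. \<Sum>x::'x\<in>UNIV. (B/2) * a y + (B/2) * a x)"
    by (simp add: algebra_simps add_divide_distrib)
  also have "\<dots> = (\<Sum>y\<in>UNIV. \<Sum>x::'x\<in>UNIV. (B/2) * a y) + (\<Sum>y::'x\<in>UNIV. \<Sum>x\<in>UNIV. (B/2) * a x)"
    by (simp only: sum.distrib)
  also have "(\<Sum>y\<in>UNIV. \<Sum>x::'x\<in>UNIV. (B/2) * a y) = real CARD('x) * ((B/2) * (\<Sum>y\<in>UNIV. a y))"
    by (simp add: sum_distrib_left)
  also have "(\<Sum>y::'x\<in>UNIV. \<Sum>x\<in>UNIV. (B/2) * a x) = real CARD('x) * ((B/2) * (\<Sum>y\<in>UNIV. a y))"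
    by (simp add: sum_distrib_left)
  finally show ?thesis by (simp add: algebra_simps)
qed

lemma sol_nonneg:
  fixes G :: "real \<Rightarrow> 'x::finite \<Rightarrow> 'x \<Rightarrow> real" and q :: "real \<Rightarrow> 'x \<Rightarrow> real"
  assumes off: "\<forall>t\<in>{0..1}. \<forall>x y. x \<noteq> y \<longrightarrow> G t x y \<ge> 0"
    and bd: "\<forall>t\<in>{0..1}. \<forall>x y. \<bar>G t x y\<bar> \<le> Bd"
    and ode: "backward_marginals G q" and init: "\<forall>x. q 1 x \<ge> 0"
    and t: "t \<in> {0..1}"
  shows "q t z \<ge> 0"
proof -
  define m where "m s y = min (q s y) 0" for s y
  define N where "N s = (\<Sum>y\<in>UNIV. (m s y)^2)" for s
  define C where "C = 2 * Bd * real CARD('x)"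
  define H where "H s = N s * exp (C * s)" for s
  define q' where "q' s y = - (\<Sum>x\<in>UNIV. G s y x * q s x)" for s y
  have dq: "((\<lambda>s. q s y) has_real_derivative q' s y) (at s within {0..1})" if "s \<in> {0..1}" for s y
    using ode that unfolding backward_marginals_def q'_def by blast
  have dN: "(N has_real_derivative (\<Sum>y\<in>UNIV. 2 * m s y * q' s y)) (at s within {0..1})"
    if s: "s \<in> {0..1}" for s
    unfolding N_def m_def
    by (rule DERIV_sum) (rule DERIV_chain2[OF minsq_deriv dq[OF s]])
  have key: "(\<Sum>y\<in>UNIV. m s y * (\<Sum>x\<in>UNIV. G s y x * q s x)) \<le> Bd * real CARD('x) * N s"
    if s: "s \<in> {0..1}" for s
  proof -
    have "(\<Sum>y\<in>UNIV. m s y * (\<Sum>x\<in>UNIV. G s y x * q s x))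
          = (\<Sum>y\<in>UNIV. \<Sum>x\<in>UNIV. m s y * G s y x * q s x)"
      by (simp add: sum_distrib_left mult.assoc)
    also have "\<dots> \<le> (\<Sum>y\<in>UNIV. \<Sum>x\<in>UNIV. Bd * ((m s y)^2 + (m s x)^2) / 2)"
    proof (intro sum_mono)
      fix y x
      have gb: "\<bar>G s y x\<bar> \<le> Bd" using bd s by auto
      show "m s y * G s y x * q s x \<le> Bd * ((m s y)^2 + (m s x)^2) / 2"
      proof (cases "y = x")
        case True thus ?thesis using pos_term_diag[OF gb, of "q s x"] by (simp add: m_def)
      next
        case False
        have g0: "G s y x \<ge> 0" using off s False by auto
        show ?thesis using pos_term_off[OF g0 gb, of "q s y" "q s x"] by (simp add: m_def)
      qed
    qed
    also have "\<dots> = Bd * real CARD('x) * N s" unfolding N_def by (rule sum_pair_avg)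
    finally show ?thesis .
  qed
  define N' where "N' s = (\<Sum>y\<in>UNIV. 2 * m s y * q' s y)" for s
  have dH: "(H has_real_derivative N' s * exp (C * s) + exp (C * s) * C * N s)
      (at s within {0..1})" if s: "s \<in> {0..1}" for s
  proof -
    have e: "((\<lambda>s. exp (C * s)) has_real_derivative exp (C * s) * C) (at s within {0..1})"
      by (auto intro!: derivative_eq_intros)
    show ?thesis unfolding H_def N'_def using DERIV_mult[OF dN[OF s] e] by simp
  qed
  have Hnn: "N' s * exp (C * s) + exp (C * s) * C * N s \<ge> 0"
    if s: "s \<in> {0..1}" for s
  proof -
    have "N' s = - 2 * (\<Sum>y\<in>UNIV. m s y * (\<Sum>x\<in>UNIV. G s y x * q s x))"
      by (simp add: N'_def q'_def sum_distrib_left algebra_simps sum_negf)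
    hence "N' s + C * N s \<ge> 0" using key[OF s] by (simp add: C_def)
    hence "exp (C * s) * (N' s + C * N s) \<ge> 0" by simp
    thus ?thesis by (simp add: algebra_simps)
  qed
  have "H t \<le> H 1"
  proof (rule mono_within[of t 1 H])
    show "t \<le> 1" using t by simp
    fix s assume s: "s \<in> {t..1}"
    hence s01: "s \<in> {0..1}" using t by auto
    show "(H has_real_derivative N' s * exp (C * s) + exp (C * s) * C * N s) (at s within {t..1})"
      using dH[OF s01] DERIV_subset t by fastforce
    show "N' s * exp (C * s) + exp (C * s) * C * N s \<ge> 0" using Hnn[OF s01] .
  qed
  moreover have "N 1 = 0" using init by (simp add: N_def m_def)
  ultimately have "N t \<le> 0" by (simp add: H_def mult_le_0_iff)
  moreover have "\<forall>y\<in>UNIV. (m t y)^2 \<ge> 0" by simp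
  ultimately have "\<forall>y\<in>UNIV. (m t y)^2 = 0" unfolding N_def
    using sum_nonneg_eq_0_iff[of UNIV "\<lambda>y. (m t y)^2"] by (simp add: antisym sum_nonneg)
  hence "m t z = 0" by simp
  thus ?thesis by (simp add: m_def min_def split: if_splits)
qed



lemma sol_sum:
  fixes q :: "real \<Rightarrow> 'x::finite \<Rightarrow> real"
  assumes ode: "backward_marginals (\<lambda>t. gen (Q t) (r t)) q" and t: "t \<in> {0..1}"
  shows "(\<Sum>x\<in>UNIV. q t x) = (\<Sum>x\<in>UNIV. q 1 x)"
proof -
  define S where "S s = (\<Sum>x\<in>UNIV. q s x)" for s
  have dS: "(S has_real_derivative 0) (at s within {0..1})" if s: "s \<in> {0..1}" for s
  proof -
    have d: "(S has_real_derivative (\<Sum>y\<in>UNIV. - (\<Sum>x\<in>UNIV. gen (Q s) (r s) y x * q s x))) (at s within {0..1})"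
      unfolding S_def using ode s unfolding backward_marginals_def by (intro DERIV_sum) blast
    have "(\<Sum>y\<in>UNIV. - (\<Sum>x\<in>UNIV. gen (Q s) (r s) y x * q s x))
        = - (\<Sum>y\<in>UNIV. \<Sum>x\<in>UNIV. gen (Q s) (r s) y x * q s x)" by (simp add: sum_negf)
    also have "(\<Sum>y\<in>UNIV. \<Sum>x\<in>UNIV. gen (Q s) (r s) y x * q s x)
        = (\<Sum>x\<in>UNIV. \<Sum>y\<in>UNIV. gen (Q s) (r s) y x * q s x)" by (rule sum.swap)
    also have "\<dots> = (\<Sum>x\<in>UNIV. (\<Sum>y\<in>UNIV. gen (Q s) (r s) y x) * q s x)" by (simp add: sum_distrib_right)
    also have "\<dots> = 0" by (simp add: gen_colsum)
    finally show ?thesis using d by simp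
  qed
  have a: "S t \<le> S 1"
  proof (rule mono_within[of t 1 S "\<lambda>_. 0"])
    show "t \<le> 1" using t by simp
    fix s assume s: "s \<in> {t..1}"
    hence s01: "s \<in> {0..1}" using t by auto
    show "(S has_real_derivative 0) (at s within {t..1})" using dS[OF s01] DERIV_subset t by fastforce
  qed simp
  have b: "- S t \<le> - S 1"
  proof (rule mono_within[of t 1 "\<lambda>s. - S s" "\<lambda>_. 0"])
    show "t \<le> 1" using t by simp
    fix s assume s: "s \<in> {t..1}"
    hence s01: "s \<in> {0..1}" using t by auto
    have "(S has_real_derivative 0) (at s within {t..1})" using dS[OF s01] DERIV_subset t by fastforce
    from DERIV_minus[OF this] show "((\<lambda>s. - S s) has_real_derivative 0) (at s within {t..1})" by simp
  qed simp
  from a b show ?thesis by (simp add: S_def)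
qed

lemma offdiag_eq:
  fixes f :: "'x::finite \<Rightarrow> 'a::comm_monoid_add"
  shows "(\<Sum>x\<in>UNIV-{y}. f x) = (\<Sum>x\<in>UNIV. if x = y then 0 else f x)"
proof -
  have "(\<Sum>x\<in>UNIV. if x = y then 0 else f x) = 0 + (\<Sum>x\<in>UNIV-{y}. if x = y then 0 else f x)"
    using sum.remove[of UNIV y "\<lambda>x. if x = y then 0 else f x"] by simp
  also have "\<dots> = (\<Sum>x\<in>UNIV-{y}. f x)" unfolding add.left_neutral by (rule sum.cong) auto
  finally show ?thesis by simp
qed

lemma sum_remove_diag:
  fixes f :: "'x::finite \<Rightarrow> 'a::comm_monoid_add"
  shows "(\<Sum>x\<in>UNIV. f x) = f y + (\<Sum>x\<in>UNIV. if x = y then 0 else f x)"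
  using sum.remove[of UNIV y f] offdiag_eq[of f y] by simp

lemma gen_col:
  fixes Qm rr :: "'x::finite \<Rightarrow> 'x \<Rightarrow> real"
  shows "(\<Sum>x\<in>UNIV. gen Qm rr x y * h x) = (\<Sum>x\<in>UNIV. if x = y then 0 else Qm y x * rr y x * (h x - h y))"
proof -
  have "(\<Sum>x\<in>UNIV. gen Qm rr x y * h x) = gen Qm rr y y * h y + (\<Sum>x\<in>UNIV. if x = y then 0 else gen Qm rr x y * h x)"
    by (rule sum_remove_diag)
  also have "(\<Sum>x\<in>UNIV. if x = y then 0 else gen Qm rr x y * h x) = (\<Sum>x\<in>UNIV. if x = y then 0 else Qm y x * rr y x * h x)"
    by (rule sum.cong) (auto simp: gen_def)
  also have "gen Qm rr y y = - (\<Sum>x\<in>UNIV. if x = y then 0 else Qm y x * rr y x)"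
    by (simp add: gen_def offdiag_eq)
  finally have "(\<Sum>x\<in>UNIV. gen Qm rr x y * h x) = (\<Sum>x\<in>UNIV. if x = y then 0 else Qm y x * rr y x * h x)
      - (\<Sum>x\<in>UNIV. if x = y then 0 else Qm y x * rr y x) * h y" by simp
  also have "\<dots> = (\<Sum>x\<in>UNIV. (if x = y then 0 else Qm y x * rr y x * h x) - (if x = y then 0 else Qm y x * rr y x) * h y)"
    by (simp add: sum_subtractf sum_distrib_right)
  also have "\<dots> = (\<Sum>x\<in>UNIV. if x = y then 0 else Qm y x * rr y x * (h x - h y))"
    by (rule sum.cong) (auto simp: algebra_simps)
  finally show ?thesis .
qed

lemma gen_row:
  fixes Qm rr :: "'x::finite \<Rightarrow> 'x \<Rightarrow> real"
  shows "(\<Sum>y\<in>UNIV. gen Qm rr x y * v y) = (\<Sum>y\<in>UNIV. if y = x then 0 else Qm y x * rr y x * v y)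
     - (\<Sum>z\<in>UNIV. if z = x then 0 else Qm x z * rr x z) * v x"
proof -
  have "(\<Sum>y\<in>UNIV. gen Qm rr x y * v y) = gen Qm rr x x * v x + (\<Sum>y\<in>UNIV. if y = x then 0 else gen Qm rr x y * v y)"
    by (rule sum_remove_diag)
  also have "(\<Sum>y\<in>UNIV. if y = x then 0 else gen Qm rr x y * v y) = (\<Sum>y\<in>UNIV. if y = x then 0 else Qm y x * rr y x * v y)"
    by (rule sum.cong) (auto simp: gen_def)
  also have "gen Qm rr x x = - (\<Sum>z\<in>UNIV. if z = x then 0 else Qm x z * rr x z)"
    by (simp add: gen_def offdiag_eq)
  finally show ?thesis by simp
qed

lemma scal:
  fixes Q r rh Px Py Rx Ry :: real
  assumes "Q \<ge> 0" "r \<ge> 0" "rh > 0" "Px > 0" "Py > 0" "Rx > 0" "Ry > 0"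
  shows "- (Py * (Q * r * ((ln Px - ln Rx) - (ln Py - ln Ry)))) + Q * rh * (Px * Ry / Rx - Py)
         + Py * (Q * ellfun r rh) \<ge> 0"
proof -
  define w where "w = rh * Px * Ry / (Rx * Py)"
  have w: "w > 0" using assms by (simp add: w_def)
  have lw: "ln w = ln rh + ln Px + ln Ry - ln Rx - ln Py"
    using assms by (simp add: w_def ln_mult ln_div)
  have e1: "Q * Py * w = Q * rh * (Px * Ry / Rx)" using assms by (simp add: w_def)
  define E where "E = - (Py * (Q * r * ((ln Px - ln Rx) - (ln Py - ln Ry)))) + Q * rh * (Px * Ry / Rx - Py)
         + Py * (Q * ellfun r rh)"
  have "E - Q * Py * (Kfun r + w - r * ln w) = Q * rh * (Px * Ry / Rx) - Q * Py * w"
    unfolding lw ellfun_def E_def by (simp add: algebra_simps)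
  hence "E = Q * Py * (Kfun r + w - r * ln w)" using e1 by simp
  also have "\<dots> \<ge> 0" using assms Kfun_ineq[OF _ w] by simp
  finally show ?thesis unfolding E_def by simp
qed



lemma mult_if0: "(c::real) * (if b then 0 else a) = (if b then 0 else c * a)" by simp

lemma key_alg:
  fixes Qm rr rhh :: "'x::finite \<Rightarrow> 'x \<Rightarrow> real" and P R :: "'x \<Rightarrow> real"
  assumes Qn: "\<forall>x y. x \<noteq> y \<longrightarrow> Qm x y \<ge> 0" and rn: "\<forall>x y. x \<noteq> y \<longrightarrow> rr x y \<ge> 0"
    and rhp: "\<forall>x y. x \<noteq> y \<longrightarrow> rhh x y > 0" and P: "\<forall>x. P x > 0" and R: "\<forall>x. R x > 0"
  shows "- (\<Sum>x\<in>UNIV. (\<Sum>y\<in>UNIV. gen Qm rr x y * P y) * (ln (P x) - ln (R x) + 1))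
         + (\<Sum>x\<in>UNIV. P x * (\<Sum>y\<in>UNIV. gen Qm rhh x y * R y) / R x)
         \<ge> - (\<Sum>y\<in>UNIV. P y * (\<Sum>x\<in>UNIV - {y}. Qm y x * ellfun (rr y x) (rhh y x)))"
proof -
  define L where "L x = ln (P x) - ln (R x) + 1" for x
  have T1: "(\<Sum>x\<in>UNIV. (\<Sum>y\<in>UNIV. gen Qm rr x y * P y) * L x)
       = (\<Sum>y\<in>UNIV. \<Sum>x\<in>UNIV. if x = y then 0 else P y * (Qm y x * rr y x * (L x - L y)))"
  proof -
    have "(\<Sum>x\<in>UNIV. (\<Sum>y\<in>UNIV. gen Qm rr x y * P y) * L x) = (\<Sum>x\<in>UNIV. \<Sum>y\<in>UNIV. P y * (gen Qm rr x y * L x))"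
      by (simp add: sum_distrib_right sum_distrib_left mult_ac)
    also have "\<dots> = (\<Sum>y\<in>UNIV. \<Sum>x\<in>UNIV. P y * (gen Qm rr x y * L x))" by (rule sum.swap)
    also have "\<dots> = (\<Sum>y\<in>UNIV. P y * (\<Sum>x\<in>UNIV. gen Qm rr x y * L x))" by (simp add: sum_distrib_left)
    also have "\<dots> = (\<Sum>y\<in>UNIV. P y * (\<Sum>x\<in>UNIV. if x = y then 0 else Qm y x * rr y x * (L x - L y)))"
      by (simp only: gen_col)
    also have "\<dots> = (\<Sum>y\<in>UNIV. \<Sum>x\<in>UNIV. if x = y then 0 else P y * (Qm y x * rr y x * (L x - L y)))"
      by (simp only: sum_distrib_left mult_if0)
    finally show ?thesis .
  qed
  have T2: "(\<Sum>x\<in>UNIV. P x * (\<Sum>y\<in>UNIV. gen Qm rhh x y * R y) / R x)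
      = (\<Sum>y\<in>UNIV. \<Sum>x\<in>UNIV. if x = y then 0 else P x / R x * (Qm y x * rhh y x * R y))
      - (\<Sum>y\<in>UNIV. \<Sum>x\<in>UNIV. if x = y then 0 else P y * (Qm y x * rhh y x))"
  proof -
    have "(\<Sum>x\<in>UNIV. P x * (\<Sum>y\<in>UNIV. gen Qm rhh x y * R y) / R x)
       = (\<Sum>x\<in>UNIV. P x / R x * (\<Sum>y\<in>UNIV. if y = x then 0 else Qm y x * rhh y x * R y)
           - P x * (\<Sum>z\<in>UNIV. if z = x then 0 else Qm x z * rhh x z))"
    proof (rule sum.cong[OF refl])
      fix x
      have Rx: "R x > 0" using R by simp
      show "P x * (\<Sum>y\<in>UNIV. gen Qm rhh x y * R y) / R x =
         P x / R x * (\<Sum>y\<in>UNIV. if y = x then 0 else Qm y x * rhh y x * R y) -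
         P x * (\<Sum>z\<in>UNIV. if z = x then 0 else Qm x z * rhh x z)"
        unfolding gen_row using Rx by (simp add: field_simps)
    qed
    also have "\<dots> = (\<Sum>x\<in>UNIV. \<Sum>y\<in>UNIV. if y = x then 0 else P x / R x * (Qm y x * rhh y x * R y))
           - (\<Sum>x\<in>UNIV. \<Sum>z\<in>UNIV. if z = x then 0 else P x * (Qm x z * rhh x z))"
      by (simp only: sum_subtractf sum_distrib_left mult_if0)
    also have "(\<Sum>x\<in>UNIV. \<Sum>y\<in>UNIV. if y = x then 0 else P x / R x * (Qm y x * rhh y x * R y))
        = (\<Sum>y\<in>UNIV. \<Sum>x\<in>UNIV. if y = x then 0 else P x / R x * (Qm y x * rhh y x * R y))"
      by (rule sum.swap)
    also have "\<dots> = (\<Sum>y\<in>UNIV. \<Sum>x\<in>UNIV. if x = y then 0 else P x / R x * (Qm y x * rhh y x * R y))"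
      by (simp add: eq_commute)
    finally show ?thesis by simp
  qed
  have RHS: "(\<Sum>y\<in>UNIV. P y * (\<Sum>x\<in>UNIV - {y}. Qm y x * ellfun (rr y x) (rhh y x)))
      = (\<Sum>y\<in>UNIV. \<Sum>x\<in>UNIV. if x = y then 0 else P y * (Qm y x * ellfun (rr y x) (rhh y x)))"
    by (simp only: offdiag_eq sum_distrib_left mult_if0)
  define W where "W y x = - (P y * (Qm y x * rr y x * (L x - L y)))
       + (P x / R x * (Qm y x * rhh y x * R y) - P y * (Qm y x * rhh y x))
       + P y * (Qm y x * ellfun (rr y x) (rhh y x))" for y x
  have Wnn: "W y x \<ge> 0" if "x \<noteq> y" for x y
  proof -
    have "L x - L y = (ln (P x) - ln (R x)) - (ln (P y) - ln (R y))" by (simp add: L_def)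
    moreover have "P x / R x * (Qm y x * rhh y x * R y) - P y * (Qm y x * rhh y x)
        = Qm y x * rhh y x * (P x * R y / R x - P y)" by (simp add: algebra_simps)
    moreover have "- (P y * (Qm y x * rr y x * ((ln (P x) - ln (R x)) - (ln (P y) - ln (R y)))))
        + Qm y x * rhh y x * (P x * R y / R x - P y) + P y * (Qm y x * ellfun (rr y x) (rhh y x)) \<ge> 0"
      by (rule scal) (use that Qn rn rhp P R in auto)
    ultimately show ?thesis unfolding W_def by (simp add: mult.assoc)
  qed
  have "(\<Sum>y\<in>UNIV. \<Sum>x\<in>UNIV. if x = y then 0 else W y x) \<ge> 0"
    by (intro sum_nonneg) (auto intro: Wnn)
  moreover have "(\<Sum>y\<in>UNIV. \<Sum>x\<in>UNIV. if x = y then 0 else W y x)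
     = - (\<Sum>y\<in>UNIV. \<Sum>x\<in>UNIV. if x = y then 0 else P y * (Qm y x * rr y x * (L x - L y)))
       + ((\<Sum>y\<in>UNIV. \<Sum>x\<in>UNIV. if x = y then 0 else P x / R x * (Qm y x * rhh y x * R y))
      - (\<Sum>y\<in>UNIV. \<Sum>x\<in>UNIV. if x = y then 0 else P y * (Qm y x * rhh y x)))
      + (\<Sum>y\<in>UNIV. \<Sum>x\<in>UNIV. if x = y then 0 else P y * (Qm y x * ellfun (rr y x) (rhh y x)))"
    unfolding W_def by (simp add: sum.distrib sum_subtractf sum_negf if_distrib[of uminus] sum.If_cases)
  ultimately show ?thesis using T1 T2 RHS unfolding L_def by linarith
qed



lemma ln_abs_bound:
  fixes v e M :: real
  assumes "0 < e" "e \<le> 1" "1 \<le> M" "e \<le> v" "v \<le> M"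
  shows "\<bar>ln v\<bar> \<le> ln M - ln e"
proof -
  have v: "v > 0" using assms by linarith
  have "ln v \<le> ln M" using assms v by simp
  moreover have "ln e \<le> ln v" using assms by simp
  moreover have "ln e \<le> 0" using assms by simp
  moreover have "ln M \<ge> 0" using assms by simp
  ultimately show ?thesis by linarith
qed

lemma eps_bound:
  fixes Q r rh :: "real \<Rightarrow> 'x::finite \<Rightarrow> 'x \<Rightarrow> real" and qs qh :: "real \<Rightarrow> 'x \<Rightarrow> real"
    and c :: "real \<Rightarrow> 'x \<Rightarrow> real"
  assumes Qoff: "\<forall>t\<in>{0..1}. \<forall>x y. x \<noteq> y \<longrightarrow> Q t x y \<ge> 0"
    and r_nonneg: "\<forall>t\<in>{0..1}. \<forall>x y. x \<noteq> y \<longrightarrow> r t x y \<ge> 0"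
    and rh_pos: "\<forall>t\<in>{0..1}. \<forall>x y. x \<noteq> y \<longrightarrow> rh t x y > 0"
    and qs_marg: "backward_marginals (\<lambda>t. gen (Q t) (r t)) qs"
    and qh_marg: "backward_marginals (\<lambda>t. gen (Q t) (rh t)) qh"
    and qs_nn: "\<forall>t\<in>{0..1}. \<forall>x. qs t x \<ge> 0" and qh_nn: "\<forall>t\<in>{0..1}. \<forall>x. qh t x \<ge> 0"
    and qs_le: "\<forall>t\<in>{0..1}. \<forall>x. qs t x \<le> 1" and qh_le: "\<forall>t\<in>{0..1}. \<forall>x. qh t x \<le> 1"
    and K0: "K \<ge> 0" and Kb: "\<forall>t\<in>{0..1}. \<forall>x. (\<Sum>y\<in>UNIV. gen (Q t) (rh t) x y) \<le> K"
    and Am: "\<forall>t\<in>{0..1}. \<forall>x. \<bar>\<Sum>y\<in>UNIV. gen (Q t) (r t) x y\<bar> \<le> Am"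
    and c_def: "\<And>t x. c t x = (\<Sum>y\<in>UNIV-{x}. Q t x y * ellfun (r t x y) (rh t x y))"
    and c_cont: "\<forall>x. continuous_on {0..1} (\<lambda>t. c t x)"
    and eps: "0 < \<epsilon>" "\<epsilon> \<le> 1"
  shows "(\<Sum>x\<in>UNIV. (qs 0 x + \<epsilon>) * (ln (qs 0 x + \<epsilon>) - ln (qh 0 x + \<epsilon> * exp K)))
     \<le> (\<Sum>x\<in>UNIV. (qs 1 x + \<epsilon>) * (ln (qs 1 x + \<epsilon>) - ln (qh 1 x + \<epsilon>)))
       + integral {0..1} (\<lambda>t. (\<Sum>x\<in>UNIV. (qs t x + \<epsilon>) * c t x)
            + \<epsilon> * (real CARD('x) * Am * (2 * (ln (1 + exp K) - ln \<epsilon>) + 1)))"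
proof -
  define E0 where "E0 = real CARD('x) * Am * (2 * (ln (1 + exp K) - ln \<epsilon>) + 1)"
  define M where "M = 1 + exp K"
  define P where "P t x = qs t x + \<epsilon>" for t x
  define R where "R t x = qh t x + \<epsilon> * exp (K * (1 - t))" for t x
  define F where "F t = (\<Sum>x\<in>UNIV. P t x * (ln (P t x) - ln (R t x)))" for t
  define g where "g t = (\<Sum>x\<in>UNIV. (qs t x + \<epsilon>) * c t x) + \<epsilon> * E0" for t
  define P' where "P' t x = - (\<Sum>y\<in>UNIV. gen (Q t) (r t) x y * qs t y)" for t x
  define R' where "R' t x = - (\<Sum>y\<in>UNIV. gen (Q t) (rh t) x y * qh t y) - \<epsilon> * exp (K * (1 - t)) * K" for t x
  define D where "D t x = P' t x * (ln (P t x) - ln (R t x)) + (1 / P t x * P' t x - 1 / R t x * R' t x) * P t x" for t x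
  have M1: "M \<ge> 1" unfolding M_def by simp
  have Ppos: "P t x \<ge> \<epsilon>" "P t x \<le> M" if "t \<in> {0..1}" for t x
  proof -
    have "qs t x \<ge> 0" "qs t x \<le> 1" using qs_nn qs_le that by auto
    moreover have "exp K \<ge> 1" using K0 by simp
    ultimately show "P t x \<ge> \<epsilon>" "P t x \<le> M" unfolding P_def M_def using eps by linarith+
  qed
  have eK: "exp (K * (1 - t)) \<ge> 1" "exp (K * (1 - t)) \<le> exp K" if "t \<in> {0..1}" for t
    using that K0 by (auto simp: mult_left_le)
  have Rpos: "R t x \<ge> \<epsilon>" "R t x \<le> M" if "t \<in> {0..1}" for t x
  proof -
    have "\<epsilon> * exp (K * (1 - t)) \<ge> \<epsilon> * 1" using eK[OF that] eps by (intro mult_left_mono) auto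
    moreover have "qh t x \<ge> 0" using qh_nn that by auto
    ultimately show "R t x \<ge> \<epsilon>" unfolding R_def by linarith
    have "\<epsilon> * exp (K * (1 - t)) \<le> 1 * exp K" using eK[OF that] eps by (intro mult_mono) auto
    moreover have "qh t x \<le> 1" using qh_le that by auto
    ultimately show "R t x \<le> M" unfolding R_def M_def by linarith
  qed
  have dP: "((\<lambda>s. P s x) has_real_derivative P' t x) (at t within {0..1})" if "t \<in> {0..1}" for t x
  proof -
    have "((\<lambda>s. qs s x) has_real_derivative P' t x) (at t within {0..1})"
      using qs_marg that unfolding backward_marginals_def P'_def by blast
    from DERIV_add[OF this DERIV_const[of \<epsilon>]] show ?thesis unfolding P_def by simp
  qed
  have dR: "((\<lambda>s. R s x) has_real_derivative R' t x) (at t within {0..1})" if "t \<in> {0..1}" for t x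
  proof -
    have a: "((\<lambda>s. qh s x) has_real_derivative - (\<Sum>y\<in>UNIV. gen (Q t) (rh t) x y * qh t y)) (at t within {0..1})"
      using qh_marg that unfolding backward_marginals_def by blast
    have b: "((\<lambda>s. \<epsilon> * exp (K * (1 - s))) has_real_derivative - (\<epsilon> * exp (K * (1 - t)) * K)) (at t within {0..1})"
      by (auto intro!: derivative_eq_intros)
    have e: "R' t x = - (\<Sum>y\<in>UNIV. gen (Q t) (rh t) x y * qh t y) + - (\<epsilon> * exp (K * (1 - t)) * K)"
      unfolding R'_def by simp
    show ?thesis unfolding e R_def by (rule DERIV_add[OF a b])
  qed
  have dF: "(F has_real_derivative (\<Sum>x\<in>UNIV. D t x)) (at t within {0..1})" if t: "t \<in> {0..1}" for t
    unfolding F_def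
  proof (rule DERIV_sum)
    fix x
    have p: "P t x > 0" and rr: "R t x > 0" using Ppos[OF t] Rpos[OF t] eps by (auto intro: less_le_trans)
    have l: "((\<lambda>s. ln (P s x) - ln (R s x)) has_real_derivative 1 / P t x * P' t x - 1 / R t x * R' t x)
        (at t within {0..1})"
      by (rule DERIV_diff[OF DERIV_chain2[OF DERIV_ln_divide[OF p] dP[OF t]]
                             DERIV_chain2[OF DERIV_ln_divide[OF rr] dR[OF t]]])
    show "((\<lambda>s. P s x * (ln (P s x) - ln (R s x))) has_real_derivative D t x) (at t within {0..1})"
      unfolding D_def by (rule DERIV_mult[OF dP[OF t] l])
  qed
  have Dlow: "(\<Sum>x\<in>UNIV. D t x) \<ge> - (\<Sum>x\<in>UNIV. P t x * c t x) - \<epsilon> * E0" if t: "t \<in> {0..1}" for t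
  proof -
    define A where "A = gen (Q t) (r t)"
    define B where "B = gen (Q t) (rh t)"
    define e where "e = exp (K * (1 - t))"
    define a where "a x = (\<Sum>y\<in>UNIV. A x y)" for x
    define b where "b x = (\<Sum>y\<in>UNIV. B x y)" for x
    define lam where "lam x = ln (P t x) - ln (R t x)" for x
    define S1 where "S1 x = (\<Sum>y\<in>UNIV. A x y * P t y)" for x
    define S2 where "S2 x = (\<Sum>y\<in>UNIV. B x y * R t y)" for x
    define T where "T x = - (S1 x * (lam x + 1)) + P t x * S2 x / R t x" for x
    define U where "U x = \<epsilon> * a x * (lam x + 1)" for x
    define V where "V x = P t x * (\<epsilon> * e * (K - b x)) / R t x" for x
    have p: "P t x > 0" and rr: "R t x > 0" for x using Ppos[OF t] Rpos[OF t] eps by (auto intro: less_le_trans)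
    have f1: "P' t x = - S1 x + \<epsilon> * a x" for x
    proof -
      have "(\<Sum>y\<in>UNIV. A x y * qs t y) = (\<Sum>y\<in>UNIV. A x y * P t y - \<epsilon> * A x y)"
        by (rule sum.cong) (auto simp: P_def algebra_simps)
      thus ?thesis unfolding P'_def S1_def a_def A_def[symmetric] by (simp add: sum_subtractf sum_distrib_left)
    qed
    have f2: "R' t x = - S2 x + \<epsilon> * e * b x - \<epsilon> * e * K" for x
    proof -
      have "(\<Sum>y\<in>UNIV. B x y * qh t y) = (\<Sum>y\<in>UNIV. B x y * R t y - \<epsilon> * e * B x y)"
        by (rule sum.cong) (auto simp: R_def e_def algebra_simps)
      thus ?thesis unfolding R'_def S2_def b_def B_def[symmetric] e_def[symmetric]
        by (simp add: sum_subtractf sum_distrib_left)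
    qed
    have DTUV: "D t x = T x + U x + V x" for x
    proof -
      have "D t x = (- S1 x + \<epsilon> * a x) * lam x + (1 / P t x * (- S1 x + \<epsilon> * a x)
             - 1 / R t x * (- S2 x + \<epsilon> * e * b x - \<epsilon> * e * K)) * P t x"
        unfolding D_def f1 f2 lam_def ..
      also have "\<dots> = T x + U x + V x"
        unfolding T_def U_def V_def using p[of x] rr[of x] by (simp add: field_simps)
      finally show ?thesis .
    qed
    have sT: "(\<Sum>x\<in>UNIV. T x) \<ge> - (\<Sum>x\<in>UNIV. P t x * c t x)"
    proof -
      have "(\<Sum>x\<in>UNIV. T x) = - (\<Sum>x\<in>UNIV. (\<Sum>y\<in>UNIV. gen (Q t) (r t) x y * P t y) * (ln (P t x) - ln (R t x) + 1))
         + (\<Sum>x\<in>UNIV. P t x * (\<Sum>y\<in>UNIV. gen (Q t) (rh t) x y * R t y) / R t x)"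
        unfolding T_def S1_def S2_def lam_def A_def B_def by (simp add: sum.distrib sum_negf sum_subtractf)
      also have "\<dots> \<ge> - (\<Sum>y\<in>UNIV. P t y * (\<Sum>x\<in>UNIV - {y}. Q t y x * ellfun (r t y x) (rh t y x)))"
        by (rule key_alg) (use Qoff r_nonneg rh_pos t p rr in auto)
      finally show ?thesis by (simp add: c_def)
    qed
    have sU: "(\<Sum>x\<in>UNIV. U x) \<ge> - (\<epsilon> * E0)"
    proof -
      have "U x \<ge> - (\<epsilon> * (Am * (2 * (ln M - ln \<epsilon>) + 1)))" for x
      proof -
        have "\<bar>ln (P t x)\<bar> \<le> ln M - ln \<epsilon>" using ln_abs_bound[OF eps M1 Ppos[OF t]] .
        moreover have "\<bar>ln (R t x)\<bar> \<le> ln M - ln \<epsilon>" using ln_abs_bound[OF eps M1 Rpos[OF t]] .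
        ultimately have l: "\<bar>lam x + 1\<bar> \<le> 2 * (ln M - ln \<epsilon>) + 1" unfolding lam_def
          by (intro abs_leI) (auto dest!: abs_le_D1 abs_le_D2)
        have am: "\<bar>a x\<bar> \<le> Am" using Am t unfolding a_def A_def by auto
        have "\<bar>U x\<bar> = \<epsilon> * (\<bar>a x\<bar> * \<bar>lam x + 1\<bar>)" unfolding U_def using eps by (simp add: abs_mult)
        also have "\<dots> \<le> \<epsilon> * (Am * (2 * (ln M - ln \<epsilon>) + 1))"
          using eps am l by (intro mult_left_mono mult_mono) auto
        finally show ?thesis by linarith
      qed
      hence "(\<Sum>x\<in>UNIV. U x) \<ge> (\<Sum>x::'x\<in>UNIV. - (\<epsilon> * (Am * (2 * (ln M - ln \<epsilon>) + 1))))"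
        by (intro sum_mono) auto
      thus ?thesis unfolding E0_def M_def by (simp add: algebra_simps)
    qed
    have sV: "(\<Sum>x\<in>UNIV. V x) \<ge> 0"
    proof (intro sum_nonneg)
      fix x
      have "b x \<le> K" using Kb t unfolding b_def B_def by auto
      moreover have "e > 0" unfolding e_def by simp
      ultimately show "V x \<ge> 0" unfolding V_def using p[of x] rr[of x] eps by simp
    qed
    have "(\<Sum>x\<in>UNIV. D t x) = (\<Sum>x\<in>UNIV. T x) + (\<Sum>x\<in>UNIV. U x) + (\<Sum>x\<in>UNIV. V x)"
      by (simp add: DTUV sum.distrib)
    with sT sU sV show ?thesis by linarith
  qed
  have qs_cont: "continuous_on {0..1} (\<lambda>s. qs s x)" for x
    using qs_marg unfolding backward_marginals_def by (intro DERIV_continuous_on) blast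
  have g_cont: "continuous_on {0..1} g"
    unfolding g_def using qs_cont c_cont by (auto intro!: continuous_intros)
  define H where "H s = F s + integral {0..s} g" for s
  have "H 0 \<le> H 1"
  proof (rule mono_within[of 0 1 H "\<lambda>t. (\<Sum>x\<in>UNIV. D t x) + g t"])
    fix t :: real assume t: "t \<in> {0..1}"
    show "(H has_real_derivative (\<Sum>x\<in>UNIV. D t x) + g t) (at t within {0..1})"
      unfolding H_def by (rule DERIV_add[OF dF[OF t] integral_has_real_derivative[OF g_cont t]])
    have "g t = (\<Sum>x\<in>UNIV. P t x * c t x) + \<epsilon> * E0" unfolding g_def P_def ..
    then show "(\<Sum>x\<in>UNIV. D t x) + g t \<ge> 0" using Dlow[OF t] by linarith
  qed simp
  hence "F 0 \<le> F 1 + integral {0..1} g" by (simp add: H_def)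
  thus ?thesis unfolding F_def P_def R_def g_def E0_def by simp
qed



lemma ev_small: "c > 0 \<Longrightarrow> eventually (\<lambda>\<epsilon>::real. 0 < \<epsilon> \<and> \<epsilon> < c) (at_right 0)"
  unfolding eventually_at_right_field by (intro exI[of _ c]) auto

lemma term_lim:
  fixes p q c :: real
  assumes "p \<ge> 0" "q \<ge> 0" "c > 0" "p > 0 \<longrightarrow> q > 0"
  shows "((\<lambda>\<epsilon>. (p + \<epsilon>) * (ln (p + \<epsilon>) - ln (q + \<epsilon> * c))) \<longlongrightarrow> (if p = 0 then 0 else p * ln (p / q))) (at_right 0)"
proof (cases "p = 0")
  case False
  hence p: "p > 0" and q: "q > 0" using assms by auto
  have "((\<lambda>\<epsilon>. (p + \<epsilon>) * (ln (p + \<epsilon>) - ln (q + \<epsilon> * c))) \<longlongrightarrow> (p + 0) * (ln (p + 0) - ln (q + 0 * c))) (at_right 0)"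
    using p q by (intro tendsto_intros) auto
  moreover have "p * ln (p / q) = (p + 0) * (ln (p + 0) - ln (q + 0 * c))" using p q by (simp add: ln_div)
  ultimately show ?thesis using False by simp
next
  case True
  show ?thesis
  proof (cases "q = 0")
    case False
    hence q: "q > 0" using assms by simp
    have "((\<lambda>\<epsilon>::real. \<epsilon> * ln \<epsilon> - \<epsilon> * ln (q + \<epsilon> * c)) \<longlongrightarrow> 0 - 0 * ln (q + 0 * c)) (at_right 0)"
      using q by (intro tendsto_intros xlnx_lim) auto
    moreover have "\<forall>\<^sub>F \<epsilon> in at_right 0. \<epsilon> * ln \<epsilon> - \<epsilon> * ln (q + \<epsilon> * c) = (p + \<epsilon>) * (ln (p + \<epsilon>) - ln (q + \<epsilon> * c))"
      using True by (simp add: algebra_simps)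
    ultimately show ?thesis using True Lim_transform_eventually by fastforce
  next
    case q0: True
    have "((\<lambda>\<epsilon>::real. - (\<epsilon> * ln c)) \<longlongrightarrow> - (0 * ln c)) (at_right 0)"
      by (intro tendsto_intros)
    moreover have "\<forall>\<^sub>F \<epsilon> in at_right 0. - (\<epsilon> * ln c) = (p + \<epsilon>) * (ln (p + \<epsilon>) - ln (q + \<epsilon> * c))"
      using ev_small[of 1, OF zero_less_one]
    proof eventually_elim
      case (elim \<epsilon>)
      thus ?case using True q0 assms by (simp add: ln_mult algebra_simps)
    qed
    ultimately show ?thesis using True Lim_transform_eventually by fastforce
  qed
qed

lemma eps_err_lim:
  fixes C1 M :: real
  shows "((\<lambda>\<epsilon>. \<epsilon> * (C1 * (2 * (ln M - ln \<epsilon>) + 1))) \<longlongrightarrow> 0) (at_right 0)"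
proof -
  have e: "(\<lambda>\<epsilon>. \<epsilon> * (C1 * (2 * (ln M - ln \<epsilon>) + 1))) = (\<lambda>\<epsilon>. C1 * (2 * ln M + 1) * \<epsilon> - 2 * C1 * (\<epsilon> * ln \<epsilon>))"
    by (auto simp: fun_eq_iff algebra_simps)
  have "((\<lambda>\<epsilon>. C1 * (2 * ln M + 1) * \<epsilon> - 2 * C1 * (\<epsilon> * ln \<epsilon>)) \<longlongrightarrow> C1 * (2 * ln M + 1) * 0 - 2 * C1 * 0) (at_right 0)"
    by (intro tendsto_intros xlnx_lim)
  thus ?thesis unfolding e by simp
qed

lemma neg_ln_top: "filterlim (\<lambda>\<epsilon>::real. - ln \<epsilon>) at_top (at_right 0)"
  using ln_at_0 filterlim_uminus_at_top by (simp add: filterlim_uminus_at_bot)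



theorem lemma1:
  fixes Q r rh :: "real \<Rightarrow> 'x::finite \<Rightarrow> 'x \<Rightarrow> real"
    and qs qh :: "real \<Rightarrow> 'x \<Rightarrow> real"
  assumes Q_rate: "\<forall>t\<in>{0..1}. rate_matrix (Q t)"
    and r_nonneg: "\<forall>t\<in>{0..1}. \<forall>x y. x \<noteq> y \<longrightarrow> r t x y \<ge> 0"
    and rh_pos: "\<forall>t\<in>{0..1}. \<forall>x y. x \<noteq> y \<longrightarrow> rh t x y > 0"
    and Q_cont: "\<forall>x y. continuous_on {0..1} (\<lambda>t. Q t x y)"
    and r_cont: "\<forall>x y. continuous_on {0..1} (\<lambda>t. r t x y)"
    and rh_cont: "\<forall>x y. continuous_on {0..1} (\<lambda>t. rh t x y)"
    and Qs_rate: "\<forall>t\<in>{0..1}. rate_matrix (gen (Q t) (r t))"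
    and Qh_rate: "\<forall>t\<in>{0..1}. rate_matrix (gen (Q t) (rh t))"
    and qs1: "prob_vec (qs 1)"
    and qh1: "prob_vec (qh 1)"
    and qs_marg: "backward_marginals (\<lambda>t. gen (Q t) (r t)) qs"
    and qh_marg: "backward_marginals (\<lambda>t. gen (Q t) (rh t)) qh"
  shows "KL (qs 0) (qh 0)
         \<le> ereal (integral {0..1} (\<lambda>t. \<Sum>x\<in>UNIV. qs t x *
                (\<Sum>y\<in>UNIV - {x}. Q t x y * ellfun (r t x y) (rh t x y))))
           + KL (qs 1) (qh 1)"
proof -
  define n where "n = real CARD('x)"
  define c where "c t x = (\<Sum>y\<in>UNIV-{x}. Q t x y * ellfun (r t x y) (rh t x y))" for t x
  have Qoff: "\<forall>t\<in>{0..1}. \<forall>x y. x \<noteq> y \<longrightarrow> Q t x y \<ge> 0" using Q_rate unfolding rate_matrix_def by blast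
  have offs: "\<forall>t\<in>{0..1}. \<forall>x y. x \<noteq> y \<longrightarrow> gen (Q t) (r t) x y \<ge> 0"
    using Qs_rate unfolding rate_matrix_def by blast
  have offh: "\<forall>t\<in>{0..1}. \<forall>x y. x \<noteq> y \<longrightarrow> gen (Q t) (rh t) x y \<ge> 0"
    using Qh_rate unfolding rate_matrix_def by blast
  have gcs: "\<forall>x y. continuous_on {0..1} (\<lambda>t. gen (Q t) (r t) x y)" using gen_cont Q_cont r_cont by blast
  have gch: "\<forall>x y. continuous_on {0..1} (\<lambda>t. gen (Q t) (rh t) x y)" using gen_cont Q_cont rh_cont by blast
  obtain Bs where Bs: "\<forall>t\<in>{0..1}. \<forall>x y. \<bar>gen (Q t) (r t) x y\<bar> \<le> Bs"
    using cont_bound2[OF gcs] by blast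
  obtain Bh where Bh: "\<forall>t\<in>{0..1}. \<forall>x y. \<bar>gen (Q t) (rh t) x y\<bar> \<le> Bh"
    using cont_bound2[OF gch] by blast
  have qs_nn: "\<forall>t\<in>{0..1}. \<forall>x. qs t x \<ge> 0"
    using sol_nonneg[of "\<lambda>t. gen (Q t) (r t)" Bs qs] offs Bs qs_marg qs1 unfolding prob_vec_def by blast
  have qh_nn: "\<forall>t\<in>{0..1}. \<forall>x. qh t x \<ge> 0"
    using sol_nonneg[of "\<lambda>t. gen (Q t) (rh t)" Bh qh] offh Bh qh_marg qh1 unfolding prob_vec_def by blast
  have qs_sum: "(\<Sum>x\<in>UNIV. qs t x) = 1" if "t \<in> {0..1}" for t
    using sol_sum[OF qs_marg that] qs1 unfolding prob_vec_def by simp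
  have qh_sum: "(\<Sum>x\<in>UNIV. qh t x) = 1" if "t \<in> {0..1}" for t
    using sol_sum[OF qh_marg that] qh1 unfolding prob_vec_def by simp
  have qs_le: "\<forall>t\<in>{0..1}. \<forall>x. qs t x \<le> 1"
  proof (intro ballI allI)
    fix t :: real and x assume t: "t \<in> {0..1}"
    have "qs t x \<le> (\<Sum>x\<in>UNIV. qs t x)" by (rule member_le_sum) (use qs_nn t in auto)
    thus "qs t x \<le> 1" using qs_sum[OF t] by simp
  qed
  have qh_le: "\<forall>t\<in>{0..1}. \<forall>x. qh t x \<le> 1"
  proof (intro ballI allI)
    fix t :: real and x assume t: "t \<in> {0..1}"
    have "qh t x \<le> (\<Sum>x\<in>UNIV. qh t x)" by (rule member_le_sum) (use qh_nn t in auto)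
    thus "qh t x \<le> 1" using qh_sum[OF t] by simp
  qed
  define K where "K = n * \<bar>Bh\<bar>"
  define Am where "Am = n * \<bar>Bs\<bar>"
  have K0: "K \<ge> 0" unfolding K_def n_def by simp
  have Kb: "\<forall>t\<in>{0..1}. \<forall>x. (\<Sum>y\<in>UNIV. gen (Q t) (rh t) x y) \<le> K"
  proof (intro ballI allI)
    fix t :: real and x assume t: "t \<in> {0..1}"
    have "(\<Sum>y\<in>UNIV. gen (Q t) (rh t) x y) \<le> (\<Sum>y::'x\<in>UNIV. \<bar>Bh\<bar>)"
    proof (rule sum_mono)
      fix y
      have "\<bar>gen (Q t) (rh t) x y\<bar> \<le> Bh" using Bh t by blast
      thus "gen (Q t) (rh t) x y \<le> \<bar>Bh\<bar>" using abs_ge_self[of "gen (Q t) (rh t) x y"] abs_ge_self[of Bh] by linarith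
    qed
    thus "(\<Sum>y\<in>UNIV. gen (Q t) (rh t) x y) \<le> K" unfolding K_def n_def by simp
  qed
  have Amb: "\<forall>t\<in>{0..1}. \<forall>x. \<bar>\<Sum>y\<in>UNIV. gen (Q t) (r t) x y\<bar> \<le> Am"
  proof (intro ballI allI)
    fix t :: real and x assume t: "t \<in> {0..1}"
    have "\<bar>\<Sum>y\<in>UNIV. gen (Q t) (r t) x y\<bar> \<le> (\<Sum>y\<in>UNIV. \<bar>gen (Q t) (r t) x y\<bar>)" by (rule sum_abs)
    also have "\<dots> \<le> (\<Sum>y::'x\<in>UNIV. \<bar>Bs\<bar>)"
    proof (rule sum_mono)
      fix y
      have "\<bar>gen (Q t) (r t) x y\<bar> \<le> Bs" using Bs t by blast
      thus "\<bar>gen (Q t) (r t) x y\<bar> \<le> \<bar>Bs\<bar>" using abs_ge_self[of Bs] by linarith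
    qed
    finally show "\<bar>\<Sum>y\<in>UNIV. gen (Q t) (r t) x y\<bar> \<le> Am" unfolding Am_def n_def by simp
  qed
  have c_cont: "\<forall>x. continuous_on {0..1} (\<lambda>t. c t x)"
  proof
    fix x
    show "continuous_on {0..1} (\<lambda>t. c t x)"
      unfolding c_def
    proof (intro continuous_on_sum)
      fix y assume y: "y \<in> UNIV - {x}"
      have k: "continuous_on {0..1} (\<lambda>t. Kfun (r t x y))"
        by (rule continuous_on_compose2[OF Kfun_cont]) (use r_cont r_nonneg y in auto)
      have l: "continuous_on {0..1} (\<lambda>t. ln (rh t x y))"
      proof (intro continuous_on_ln)
        show "continuous_on {0..1} (\<lambda>t. rh t x y)" using rh_cont by blast
        have xy: "x \<noteq> y" using y by blast
        show "\<forall>t\<in>{0..1}. rh t x y \<noteq> 0" using rh_pos xy by (metis less_irrefl)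
      qed
      show "continuous_on {0..1} (\<lambda>t. Q t x y * ellfun (r t x y) (rh t x y))"
        unfolding ellfun_def
        by (intro continuous_on_mult continuous_on_add continuous_on_diff k l)
           (use Q_cont r_cont rh_cont in blast)+
    qed
  qed
  have qs_cont: "continuous_on {0..1} (\<lambda>s. qs s x)" for x
    using qs_marg unfolding backward_marginals_def by (intro DERIV_continuous_on) blast
  define I where "I = integral {0..1} (\<lambda>t. \<Sum>x\<in>UNIV. qs t x * c t x)"
  define J where "J = integral {0..1} (\<lambda>t. \<Sum>x\<in>UNIV. c t x)"
  define E where "E \<epsilon> = n * Am * (2 * (ln (1 + exp K) - ln \<epsilon>) + 1)" for \<epsilon>
  define F0 where "F0 \<epsilon> = (\<Sum>x\<in>UNIV. (qs 0 x + \<epsilon>) * (ln (qs 0 x + \<epsilon>) - ln (qh 0 x + \<epsilon> * exp K)))" for \<epsilon>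
  define F1 where "F1 \<epsilon> = (\<Sum>x\<in>UNIV. (qs 1 x + \<epsilon>) * (ln (qs 1 x + \<epsilon>) - ln (qh 1 x + \<epsilon> * 1)))" for \<epsilon>
  define RH where "RH \<epsilon> = F1 \<epsilon> + I + \<epsilon> * J + \<epsilon> * E \<epsilon>" for \<epsilon>
  have main: "F0 \<epsilon> \<le> RH \<epsilon>" if eps: "0 < \<epsilon>" "\<epsilon> \<le> 1" for \<epsilon>
  proof -
    have b: "F0 \<epsilon> \<le> F1 \<epsilon> + integral {0..1} (\<lambda>t. (\<Sum>x\<in>UNIV. (qs t x + \<epsilon>) * c t x) + \<epsilon> * E \<epsilon>)"
      using eps_bound[OF Qoff r_nonneg rh_pos qs_marg qh_marg qs_nn qh_nn qs_le qh_le K0 Kb Amb c_def c_cont eps]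
      unfolding F0_def F1_def E_def n_def by simp
    have i1: "(\<lambda>t. \<Sum>x\<in>UNIV. qs t x * c t x) integrable_on {0..1}"
      by (rule integrable_continuous_real) (use qs_cont c_cont in \<open>auto intro!: continuous_intros\<close>)
    have i2: "(\<lambda>t. \<epsilon> * (\<Sum>x\<in>UNIV. c t x)) integrable_on {0..1}"
      by (rule integrable_continuous_real) (use c_cont in \<open>auto intro!: continuous_intros\<close>)
    have i3: "(\<lambda>t::real. \<epsilon> * E \<epsilon>) integrable_on {0..1}"
      by (rule integrable_continuous_real) (auto intro!: continuous_intros)
    have fe: "(\<lambda>t. (\<Sum>x\<in>UNIV. (qs t x + \<epsilon>) * c t x) + \<epsilon> * E \<epsilon>)
        = (\<lambda>t. ((\<Sum>x\<in>UNIV. qs t x * c t x) + \<epsilon> * (\<Sum>x\<in>UNIV. c t x)) + \<epsilon> * E \<epsilon>)"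
      by (simp add: fun_eq_iff distrib_right sum.distrib sum_distrib_left)
    have "integral {0..1} (\<lambda>t. (\<Sum>x\<in>UNIV. (qs t x + \<epsilon>) * c t x) + \<epsilon> * E \<epsilon>)
        = (I + integral {0..1} (\<lambda>t. \<epsilon> * (\<Sum>x\<in>UNIV. c t x))) + integral {0..1} (\<lambda>t::real. \<epsilon> * E \<epsilon>)"
      unfolding fe I_def integral_add[OF integrable_add[OF i1 i2] i3] integral_add[OF i1 i2] ..
    also have "\<dots> = I + \<epsilon> * J + \<epsilon> * E \<epsilon>" unfolding J_def by simp
    finally show ?thesis using b unfolding RH_def by simp
  qed
  have integrand: "(\<lambda>t. \<Sum>x\<in>UNIV. qs t x * (\<Sum>y\<in>UNIV - {x}. Q t x y * ellfun (r t x y) (rh t x y)))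
      = (\<lambda>t. \<Sum>x\<in>UNIV. qs t x * c t x)" unfolding c_def ..
  have ev01: "eventually (\<lambda>\<epsilon>::real. 0 < \<epsilon> \<and> \<epsilon> < 1) (at_right 0)" by (rule ev_small) simp
  have evle: "eventually (\<lambda>\<epsilon>. F0 \<epsilon> \<le> RH \<epsilon>) (at_right 0)"
    using ev01 by eventually_elim (use main in auto)
  show ?thesis
  proof (cases "\<forall>x. qs 1 x > 0 \<longrightarrow> qh 1 x > 0")
    case False
    hence "KL (qs 1) (qh 1) = \<infinity>" unfolding KL_def by auto
    thus ?thesis by simp
  next
    case AC1: True
    define k1 where "k1 = (\<Sum>x\<in>UNIV. if qs 1 x = 0 then 0 else qs 1 x * ln (qs 1 x / qh 1 x))"
    have KL1: "KL (qs 1) (qh 1) = ereal k1" unfolding KL_def k1_def using AC1 by simp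
    have F1lim: "(F1 \<longlongrightarrow> k1) (at_right 0)"
      unfolding F1_def k1_def
      by (intro tendsto_sum term_lim) (use qs_nn qh_nn AC1 in auto)
    have RHlim: "(RH \<longlongrightarrow> k1 + I + 0 * J + 0) (at_right 0)"
      unfolding RH_def E_def
      by (intro tendsto_intros F1lim eps_err_lim)
    hence RHlim': "(RH \<longlongrightarrow> k1 + I) (at_right 0)" by simp
    show ?thesis
    proof (cases "\<forall>x. qs 0 x > 0 \<longrightarrow> qh 0 x > 0")
      case AC0: True
      define k0 where "k0 = (\<Sum>x\<in>UNIV. if qs 0 x = 0 then 0 else qs 0 x * ln (qs 0 x / qh 0 x))"
      have KL0: "KL (qs 0) (qh 0) = ereal k0" unfolding KL_def k0_def using AC0 by simp
      have F0lim: "(F0 \<longlongrightarrow> k0) (at_right 0)"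
        unfolding F0_def k0_def
        by (intro tendsto_sum term_lim) (use qs_nn qh_nn AC0 in auto)
      have "k0 \<le> k1 + I"
        by (rule tendsto_le[OF trivial_limit_at_right_real RHlim' F0lim evle])
      thus ?thesis unfolding KL0 KL1 I_def[symmetric] integrand by simp
    next
      case False
      then obtain x0 where p0: "qs 0 x0 > 0" and "\<not> qh 0 x0 > 0" by blast
      moreover have "qh 0 x0 \<ge> 0" using qh_nn by auto
      ultimately have q0: "qh 0 x0 = 0" by linarith
      define p where "p = qs 0 x0"
      define M where "M = 1 + exp K"
      define LB where "LB \<epsilon> = p * (ln p - ln \<epsilon> - K) - n * M" for \<epsilon>
      have pp: "p > 0" using p0 p_def by simp
      have evlb: "eventually (\<lambda>\<epsilon>. LB \<epsilon> \<le> F0 \<epsilon>) (at_right 0)"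
      proof -
        have "p * exp (- K) > 0" using pp by simp
        from ev_small[OF this] ev01 show ?thesis
        proof eventually_elim
          case (elim \<epsilon>)
          hence e: "0 < \<epsilon>" "\<epsilon> < 1" "\<epsilon> < p * exp (- K)" by auto
          define T where "T x = (qs 0 x + \<epsilon>) * (ln (qs 0 x + \<epsilon>) - ln (qh 0 x + \<epsilon> * exp K))" for x
          have TM: "T x + M \<ge> 0" for x
          proof -
            define Pv where "Pv = qs 0 x + \<epsilon>"
            define Rv where "Rv = qh 0 x + \<epsilon> * exp K"
            have Pv: "Pv > 0" using qs_nn e unfolding Pv_def by (simp add: add_nonneg_pos)
            have Rv: "Rv > 0" using qh_nn e unfolding Rv_def by (simp add: add_nonneg_pos)
            have "ln (Rv / Pv) \<le> Rv / Pv - 1" using Pv Rv by (intro ln_le_minus_one) simp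
            hence "Pv * ln (Rv / Pv) \<le> Pv * (Rv / Pv - 1)" using Pv by (intro mult_left_mono) auto
            hence "Pv * (ln Rv - ln Pv) \<le> Rv - Pv" using Pv Rv by (simp add: ln_div algebra_simps)
            moreover have "Rv \<le> M" unfolding Rv_def M_def using qh_le e
              by (smt (verit, best) atLeastAtMost_iff mult_le_cancel_right1 exp_gt_zero)
            ultimately show ?thesis using Pv unfolding T_def Pv_def[symmetric] Rv_def[symmetric]
              by (simp add: algebra_simps)
          qed
          have Tx0: "T x0 \<ge> p * (ln p - ln \<epsilon> - K)"
          proof -
            have lR: "ln (qh 0 x0 + \<epsilon> * exp K) = ln \<epsilon> + K" using q0 e by (simp add: ln_mult)
            have "ln \<epsilon> < ln (p * exp (- K))" using e by simp
            hence pos: "ln p - ln \<epsilon> - K > 0" using pp by (simp add: ln_mult)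
            have "ln p \<le> ln (p + \<epsilon>)" using pp e by simp
            hence "ln p - ln \<epsilon> - K \<le> ln (p + \<epsilon>) - ln \<epsilon> - K" by simp
            hence "p * (ln p - ln \<epsilon> - K) \<le> (p + \<epsilon>) * (ln (p + \<epsilon>) - ln \<epsilon> - K)"
              using pos pp e by (intro mult_mono) auto
            thus ?thesis unfolding T_def lR p_def by (simp add: algebra_simps)
          qed
          have "T x0 + M \<le> (\<Sum>x\<in>UNIV. T x + M)" by (rule member_le_sum) (use TM in auto)
          also have "\<dots> = F0 \<epsilon> + n * M" unfolding F0_def T_def n_def by (simp add: sum.distrib)
          finally have "T x0 - n * M \<le> F0 \<epsilon>" using TM[of x0] by (smt (verit) exp_gt_zero M_def)
          thus ?case using Tx0 unfolding LB_def by linarith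
        qed
      qed
      have LBtop: "filterlim LB at_top (at_right 0)"
      proof -
        have "filterlim (\<lambda>\<epsilon>. (p * (ln p - K) - n * M) + p * (- ln \<epsilon>)) at_top (at_right 0)"
          by (rule filterlim_tendsto_add_at_top[OF tendsto_const
                filterlim_tendsto_pos_mult_at_top[OF tendsto_const pp neg_ln_top]])
        moreover have "(\<lambda>\<epsilon>. (p * (ln p - K) - n * M) + p * (- ln \<epsilon>)) = LB"
          unfolding LB_def by (auto simp: fun_eq_iff algebra_simps)
        ultimately show ?thesis by simp
      qed
      have ev1: "eventually (\<lambda>\<epsilon>. RH \<epsilon> < k1 + I + 1) (at_right 0)"
        using RHlim' by (rule order_tendstoD) simp
      have ev2: "eventually (\<lambda>\<epsilon>. k1 + I + 1 \<le> LB \<epsilon>) (at_right 0)"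
        using LBtop by (simp add: filterlim_at_top)
      have "eventually (\<lambda>\<epsilon>::real. False) (at_right 0)"
        using ev1 ev2 evle evlb by eventually_elim linarith
      hence False by (simp add: eventually_False)
      thus ?thesis ..
    qed
  qed
qed


end
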